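(* Let $x\in\mathbb R$, $A,B\in\frac12\mathbb Z$ with $A\equiv B\bmod 1$. Then $$p(a,b,x)=\frac{\Gamma(A+a-x)\,\Gamma(B+b-x)}{\Gamma(A+a+x)\,\Gamma(B+b+x)}>0\quad\text{for all }a,b\in\mathbb Z_{\ge0}$$ if and only if either $A,B\in\mathbb Z_{\ge1}$ and $|x|<\min(A,B)$, or $A,B\in\frac12+\mathbb Z$ and $|x|<\max\bigl(\frac12,\min(A,B)\bigr)$. *)

theory Defs
  imports "HOL-Analysis.Analysis"
begin

text \<open>Isabelle's real Gamma function takes the
value 0 at its poles (the non-positive integers), so p is 0 whenever any of the four
Gamma factors sits at a pole; in particular p > 0 then fails.\<close>
definition p_ratio :: "real \<Rightarrow> real \<Rightarrow> nat \<Rightarrow> nat \<Rightarrow> real \<Rightarrow> real" where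
  "p_ratio A B a b x =
     (Gamma (A + real a - x) * Gamma (B + real b - x)) /
     (Gamma (A + real a + x) * Gamma (B + real b + x))"

end

theory Submission
  imports Defs
begin

lemma not_Int_between:
  fixes t :: real
  assumes "of_int n < t" "t < of_int n + 1"
  shows "t \<notin> \<int>"
proof
  assume "t \<in> \<int>"
  then obtain m where m: "t = of_int m" by (auto elim: Ints_cases)
  with assms have "n < m" "m < n + 1" by linarith+
  then show False by linarith
qed

lemma Gamma_shift:
  fixes t :: real
  assumes "t \<notin> \<int>"
  shows "Gamma (t + 1) = t * Gamma t"
  using assms by (intro Gamma_plus1) auto

lemma Gamma_same_interval_aux:
  fixes k :: nat
  shows "\<And>n t t'. n \<ge> - int k \<Longrightarrow> of_int n < t \<Longrightarrow> t < of_int n + 1 \<Longrightarrow>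
     of_int n < t' \<Longrightarrow> t' < of_int n + 1 \<Longrightarrow> Gamma (t::real) * Gamma t' > 0"
proof (induction k)
  case 0
  then have "t > 0" "t' > 0" by linarith+
  then show ?case by simp
next
  case (Suc k n t t')
  show ?case
  proof (cases "n \<ge> - int k")
    case True
    then show ?thesis using Suc by blast
  next
    case False
    then have n: "n + 1 \<ge> - int k" "n < 0" using Suc.prems by linarith+
    have "Gamma (t+1) * Gamma (t'+1) > 0"
      by (rule Suc.IH[OF n(1)]) (use Suc.prems in auto)
    moreover have "Gamma (t+1) = t * Gamma t"
      by (rule Gamma_shift, rule not_Int_between[of n]) (use Suc.prems in auto)
    moreover have "Gamma (t'+1) = t' * Gamma t'"
      by (rule Gamma_shift, rule not_Int_between[of n]) (use Suc.prems in auto)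
    moreover have "t < 0" "t' < 0" using Suc.prems n by (auto simp: of_int_less_iff[symmetric])
    ultimately have "(t * t') * (Gamma t * Gamma t') > 0" by (simp add: algebra_simps)
    moreover have "t * t' > 0" using \<open>t < 0\<close> \<open>t' < 0\<close> by (simp add: mult_neg_neg)
    ultimately show ?thesis by (simp add: zero_less_mult_iff)
  qed
qed

lemma Gamma_same_interval:
  fixes t t' :: real
  assumes "of_int n < t" "t < of_int n + 1" "of_int n < t'" "t' < of_int n + 1"
  shows "Gamma t * Gamma t' > 0"
  using Gamma_same_interval_aux[of "nat (-n)" n t t'] assms by simp

lemma Gamma_neg_unit:
  fixes t :: real
  assumes "-1 < t" "t < 0"
  shows "Gamma t < 0"
proof -
  have "Gamma (t + 1) = t * Gamma t"
    by (rule Gamma_shift, rule not_Int_between[of "-1"]) (use assms in auto)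
  moreover have "Gamma (t + 1) > 0" using assms by simp
  ultimately show ?thesis using assms by (simp add: zero_less_mult_iff)
qed

lemma ratio_sym:
  fixes c x :: real
  shows "(Gamma (c - - x) / Gamma (c + - x) > 0) \<longleftrightarrow> (Gamma (c - x) / Gamma (c + x) > 0)"
  by (auto simp: zero_less_divide_iff)

lemma ratio_abs:
  fixes c x :: real
  shows "(Gamma (c - x) / Gamma (c + x) > 0) \<longleftrightarrow> (Gamma (c - \<bar>x\<bar>) / Gamma (c + \<bar>x\<bar>) > 0)"
proof (cases "x \<ge> 0")
  case False
  then have "\<bar>x\<bar> = - x" by simp
  then show ?thesis using ratio_sym[of c x] by simp
qed simp

lemma ratio_pos_big:
  fixes c y :: real
  assumes "\<bar>y\<bar> < c"
  shows "Gamma (c - y) / Gamma (c + y) > 0"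
  using assms by simp

lemma ratio_pos_half:
  fixes c y :: real
  assumes "c - 1/2 \<in> \<int>" "\<bar>y\<bar> < 1/2"
  shows "Gamma (c - y) / Gamma (c + y) > 0"
proof -
  obtain m where m: "c - 1/2 = of_int m" using assms(1) by (auto elim: Ints_cases)
  have "Gamma (c - y) * Gamma (c + y) > 0"
    by (rule Gamma_same_interval[of m]) (use m assms(2) in auto)
  then show ?thesis by (simp add: zero_less_mult_iff zero_less_divide_iff)
qed

lemma ratio_fail:
  fixes A y :: real
  assumes "y \<ge> 0" "y \<ge> A" "2 * A \<in> \<int>" "y \<ge> 1/2 \<or> A \<in> \<int>"
  shows "\<exists>a::nat. \<not> Gamma (A + real a - y) / Gamma (A + real a + y) > 0"
proof (cases "y - A \<in> \<int>")
  case True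
  then obtain m where m: "y - A = of_int m" by (auto elim: Ints_cases)
  have "of_int m \<ge> (0::real)" using m assms by linarith
  then have "m \<ge> 0" by simp
  then have "real (nat m) = y - A" using m by simp
  then show ?thesis by (intro exI[of _ "nat m"]) simp
next
  case False
  define m where "m = floor (y - A)"
  have m0: "m \<ge> 0" using assms unfolding m_def by simp
  have le: "of_int m \<le> y - A" "y - A < of_int m + 1" unfolding m_def by linarith+
  have ne: "of_int m \<noteq> y - A" using False by (metis Ints_of_int)
  define c where "c = A + of_int m"
  have rc: "A + real (nat m) = c" using m0 unfolding c_def by simp
  have c1: "-1 < c - y" "c - y < 0" using le ne unfolding c_def by auto
  have "Gamma (c - y) < 0" by (rule Gamma_neg_unit) (use c1 in auto)
  moreover have "c + y > 0"
  proof (cases "y \<ge> 1/2")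
    case True
    then show ?thesis using c1 by linarith
  next
    case F: False
    then have AI: "A \<in> \<int>" using assms(4) by auto
    then have "c \<in> \<int>" unfolding c_def by simp
    then obtain k where k: "c = of_int k" by (auto elim: Ints_cases)
    have "y \<noteq> 0" using False AI by auto
    then have "y > 0" using assms(1) by simp
    moreover have "c > -1" using c1 F assms(1) by linarith
    then have "k > -1" using k by simp
    then have "c \<ge> 0" using k by simp
    ultimately show ?thesis by simp
  qed
  then have "Gamma (c + y) > 0" by simp
  ultimately have "\<not> Gamma (c - y) / Gamma (c + y) > 0"
    by (simp add: zero_less_divide_iff)
  then show ?thesis using rc by (intro exI[of _ "nat m"]) simp
qed

lemma char_int:
  fixes A x :: real
  assumes "A \<in> \<int>"
  shows "(\<forall>a::nat. Gamma (A + real a - x) / Gamma (A + real a + x) > 0) \<longleftrightarrow> (A \<ge> 1 \<and> \<bar>x\<bar> < A)"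
proof
  assume H: "\<forall>a::nat. Gamma (A + real a - x) / Gamma (A + real a + x) > 0"
  show "A \<ge> 1 \<and> \<bar>x\<bar> < A"
  proof (rule ccontr)
    assume N: "\<not> (A \<ge> 1 \<and> \<bar>x\<bar> < A)"
    have "\<bar>x\<bar> \<ge> A"
    proof (rule ccontr)
      assume "\<not> \<bar>x\<bar> \<ge> A"
      then have "A > 0" "A < 1" using N by auto
      then show False using assms by (metis Ints_cases of_int_0_less_iff of_int_less_1_iff not_less zero_less_iff_neq_zero less_le_not_le int_one_le_iff_zero_less of_int_1_le_iff)
    qed
    from ratio_fail[OF _ this _ ] assms obtain a :: nat where
      "\<not> Gamma (A + real a - \<bar>x\<bar>) / Gamma (A + real a + \<bar>x\<bar>) > 0" by auto
    with H ratio_abs show False by blast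
  qed
next
  assume "A \<ge> 1 \<and> \<bar>x\<bar> < A"
  then show "\<forall>a::nat. Gamma (A + real a - x) / Gamma (A + real a + x) > 0"
    by (intro allI ratio_pos_big) auto
qed

lemma char_half:
  fixes A x :: real
  assumes "A - 1/2 \<in> \<int>"
  shows "(\<forall>a::nat. Gamma (A + real a - x) / Gamma (A + real a + x) > 0) \<longleftrightarrow> \<bar>x\<bar> < max (1/2) A"
proof
  assume H: "\<forall>a::nat. Gamma (A + real a - x) / Gamma (A + real a + x) > 0"
  show "\<bar>x\<bar> < max (1/2) A"
  proof (rule ccontr)
    assume N: "\<not> \<bar>x\<bar> < max (1/2) A"
    have A2: "2 * A \<in> \<int>"
    proof -
      have "2 * (A - 1/2) + 1 \<in> \<int>" using assms by (intro Ints_add Ints_mult) auto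
      then show ?thesis by (simp add: algebra_simps)
    qed
    have y: "\<bar>x\<bar> \<ge> 0" "\<bar>x\<bar> \<ge> A" "\<bar>x\<bar> \<ge> 1/2" using N by auto
    from ratio_fail[OF y(1,2) A2] y(3) obtain a :: nat where
      "\<not> Gamma (A + real a - \<bar>x\<bar>) / Gamma (A + real a + \<bar>x\<bar>) > 0" by auto
    with H ratio_abs show False by blast
  qed
next
  assume X: "\<bar>x\<bar> < max (1/2) A"
  show "\<forall>a::nat. Gamma (A + real a - x) / Gamma (A + real a + x) > 0"
  proof
    fix a :: nat
    show "Gamma (A + real a - x) / Gamma (A + real a + x) > 0"
    proof (cases "\<bar>x\<bar> < 1/2")
      case True
      have "A + real a - 1/2 \<in> \<int>"
      proof -
        have "(A - 1/2) + real a \<in> \<int>" using assms by simp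
        then show ?thesis by (simp add: algebra_simps)
      qed
      then show ?thesis using True by (rule ratio_pos_half)
    next
      case False
      then show ?thesis using X by (intro ratio_pos_big) auto
    qed
  qed
qed

lemma split_prod:
  fixes f g :: "nat \<Rightarrow> real"
  assumes "\<exists>a. f a > 0" "\<exists>b. g b > 0"
  shows "(\<forall>a b. f a * g b > 0) \<longleftrightarrow> (\<forall>a. f a > 0) \<and> (\<forall>b. g b > 0)"
proof
  assume H: "\<forall>a b. f a * g b > 0"
  obtain a0 where a0: "f a0 > 0" using assms by auto
  obtain b0 where b0: "g b0 > 0" using assms by auto
  have "\<forall>b. g b > 0" using H a0 by (metis zero_less_mult_pos)
  moreover have "\<forall>a. f a > 0" using H b0 by (metis zero_less_mult_pos2)
  ultimately show "(\<forall>a. f a > 0) \<and> (\<forall>b. g b > 0)" by simp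
qed auto

lemma exists_big:
  fixes A x :: real
  shows "\<exists>a::nat. Gamma (A + real a - x) / Gamma (A + real a + x) > 0"
proof -
  define a where "a = nat (ceiling (\<bar>x\<bar> - A)) + 1"
  have "real a \<ge> \<bar>x\<bar> - A + 1" unfolding a_def by linarith
  then have "\<bar>x\<bar> < A + real a" by linarith
  then show ?thesis by (intro exI[of _ a] ratio_pos_big)
qed

theorem lemma15p4:
  fixes x A B :: real
  assumes "2 * A \<in> \<int>" and "2 * B \<in> \<int>" and "A - B \<in> \<int>"
  shows "(\<forall>a b :: nat. p_ratio A B a b x > 0) \<longleftrightarrow>
           ((A \<in> \<int> \<and> A \<ge> 1 \<and> B \<in> \<int> \<and> B \<ge> 1 \<and> \<bar>x\<bar> < min A B) \<or>
            (A - 1/2 \<in> \<int> \<and> B - 1/2 \<in> \<int> \<and> \<bar>x\<bar> < max (1/2) (min A B)))"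
proof -
  let ?f = "\<lambda>a::nat. Gamma (A + real a - x) / Gamma (A + real a + x)"
  let ?g = "\<lambda>b::nat. Gamma (B + real b - x) / Gamma (B + real b + x)"
  have pe: "p_ratio A B a b x = ?f a * ?g b" for a b
    unfolding p_ratio_def by simp
  have L: "(\<forall>a b :: nat. p_ratio A B a b x > 0) \<longleftrightarrow> (\<forall>a. ?f a > 0) \<and> (\<forall>b. ?g b > 0)"
    unfolding pe by (rule split_prod) (rule exists_big)+
  have half_or: "C \<in> \<int> \<or> C - 1/2 \<in> \<int>" if H: "2 * C \<in> \<int>" for C :: real
  proof -
    obtain k where k: "2 * C = of_int k" using Ints_cases[OF H] by blast
    show ?thesis
    proof (cases "even k")
      case True
      then obtain j where "k = 2 * j" by auto
      then have "C = of_int j" using k by simp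
      then show ?thesis by simp
    next
      case False
      then obtain j where "k = 2 * j + 1" using oddE by blast
      then have "C - 1/2 = of_int j" using k by simp
      then show ?thesis by simp
    qed
  qed
  have not_both: "\<not> (C \<in> \<int> \<and> C - 1/2 \<in> \<int>)" for C :: real
  proof
    assume "C \<in> \<int> \<and> C - 1/2 \<in> \<int>"
    then have "C - (C - 1/2) \<in> \<int>" by (intro Ints_diff) auto
    then have "(1/2::real) \<in> \<int>" by simp
    then obtain k where "(1/2::real) = of_int k" by (auto elim: Ints_cases)
    then have "(1::real) = 2 * of_int k" by simp
    then have "(1::int) = 2 * k" by (metis of_int_1 of_int_eq_iff of_int_mult of_int_numeral)
    then show False by presburger
  qed
  have shiftI: "B \<in> \<int> \<longleftrightarrow> A \<in> \<int>"
  proof -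
    have "A = B + (A - B)" "B = A - (A - B)" by simp_all
    then show ?thesis using assms(3) Ints_add Ints_diff by metis
  qed
  have shiftH: "B - 1/2 \<in> \<int> \<longleftrightarrow> A - 1/2 \<in> \<int>"
  proof -
    have "A - 1/2 = (B - 1/2) + (A - B)" by simp
    moreover have "B - 1/2 = (A - 1/2) - (A - B)" by simp
    ultimately show ?thesis using assms(3) Ints_add Ints_diff by metis
  qed
  show ?thesis
  proof (cases "A \<in> \<int>")
    case True
    then have BI: "B \<in> \<int>" using shiftI by simp
    have nh: "\<not> A - 1/2 \<in> \<int>" using not_both True by blast
    show ?thesis unfolding L char_int[OF True] char_int[OF BI] using True BI nh by auto
  next
    case False
    then have AH: "A - 1/2 \<in> \<int>" using half_or assms(1) by blast
    then have BH: "B - 1/2 \<in> \<int>" using shiftH by simp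
    show ?thesis unfolding L char_half[OF AH] char_half[OF BH] using False AH BH
      by (auto simp: max_def min_def)
  qed
qed

end
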